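(* Let $a_1,\dots,a_n$ be nonzero integers, consider the equation $a_1x_1+\cdots+a_nx_n=0$, and for $1\le l\le n$ let $$S_l=-\frac{\left(\sum_{i=1}^n a_i\right)-a_l}{a_l}.$$ Suppose there exists an upper triangular $m\times m$ matrix $(c_{i,j})$ whose entries $c_{i,j}$ with $i\le j$ are all positive, each equal to $S_l$ for some $1\le l\le n$, and which has the linkage property. Then the equation is strongly $m$-regular; that is, for every finite collection of inequalities $A_{j,1}x_1+\cdots+A_{j,n}x_n\neq0$ ($1\le j\le k$, $A_{j,i}\in\mathbb{Z}$), none of which is a multiple of the equation, the system consisting of the equation and these inequalities is $m$-regular.
   Context: An upper triangular $m\times m$ matrix $(c_{i,j})$ (with $c_{i,j}=0$ for $i>j$) has the linkage property if for every integer $i$ with $1\le i\le m-1$ and every $j$ with $i<j\le m$, one has $c_{1,i}\cdot c_{i+1,j}=c_{1,j}$. An inequality $A_{1}x_1+\cdots+A_nx_n\neq0$ is a multiple of the equation if $(A_1,\dots,A_n)$ is a scalar multiple of $(a_1,\dots,a_n)$. A system of the equation together with finitely many inequalities is $m$-regular if for every coloring of the positive integers with $m$ colors there exist positive integers $x_1,\dots,x_n$, all of the same color, satisfying the equation and all inequalities. The equation is strongly $m$-regular if adding any finite set of integer-coefficient inequalities, none a multiple of the equation, yields an $m$-regular system. *)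

theory Defs
  imports Main "HOL.Rat"
begin

text \<open>Coefficients of the equation are indexed 1..n: a :: nat \<Rightarrow> int.
  Variables x_1..x_n are positive integers, represented as nat with x i > 0.
  An m-colouring of the positive integers is chi :: nat \<Rightarrow> nat with chi x < m for x > 0.\<close>

definition lin_form :: "nat \<Rightarrow> (nat \<Rightarrow> int) \<Rightarrow> (nat \<Rightarrow> nat) \<Rightarrow> int" where
  "lin_form n A x = (\<Sum>i = 1..n. A i * int (x i))"

definition S_val :: "nat \<Rightarrow> (nat \<Rightarrow> int) \<Rightarrow> nat \<Rightarrow> rat" where
  "S_val n a l = - ((of_int (\<Sum>i = 1..n. a i) - of_int (a l)) / of_int (a l))"

definition is_multiple :: "nat \<Rightarrow> (nat \<Rightarrow> int) \<Rightarrow> (nat \<Rightarrow> int) \<Rightarrow> bool" where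
  "is_multiple n a A \<longleftrightarrow> (\<exists>r::rat. \<forall>i\<in>{1..n}. of_int (A i) = r * of_int (a i))"

definition m_regular :: "nat \<Rightarrow> nat \<Rightarrow> (nat \<Rightarrow> int) \<Rightarrow> (nat \<Rightarrow> int) list \<Rightarrow> bool" where
  "m_regular m n a ineqs \<longleftrightarrow>
     (\<forall>chi :: nat \<Rightarrow> nat. (\<forall>x. 0 < x \<longrightarrow> chi x < m) \<longrightarrow>
        (\<exists>x :: nat \<Rightarrow> nat. (\<forall>i\<in>{1..n}. 0 < x i) \<and>
            (\<exists>col. \<forall>i\<in>{1..n}. chi (x i) = col) \<and>
            lin_form n a x = 0 \<and>
            (\<forall>A\<in>set ineqs. lin_form n A x \<noteq> 0)))"

definition strongly_m_regular :: "nat \<Rightarrow> nat \<Rightarrow> (nat \<Rightarrow> int) \<Rightarrow> bool" where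
  "strongly_m_regular m n a \<longleftrightarrow>
     (\<forall>ineqs :: (nat \<Rightarrow> int) list. (\<forall>A\<in>set ineqs. \<not> is_multiple n a A) \<longrightarrow>
        m_regular m n a ineqs)"

definition upper_triangular :: "nat \<Rightarrow> (nat \<Rightarrow> nat \<Rightarrow> rat) \<Rightarrow> bool" where
  "upper_triangular m c \<longleftrightarrow> (\<forall>i\<in>{1..m}. \<forall>j\<in>{1..m}. j < i \<longrightarrow> c i j = 0)"

definition linkage_property :: "nat \<Rightarrow> (nat \<Rightarrow> nat \<Rightarrow> rat) \<Rightarrow> bool" where
  "linkage_property m c \<longleftrightarrow>
     (\<forall>i. 1 \<le> i \<and> i \<le> m - 1 \<longrightarrow> (\<forall>j. i < j \<and> j \<le> m \<longrightarrow> c 1 i * c (i + 1) j = c 1 j))"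

end

theory Submission
  imports Defs
begin


definition mono_ap :: "(nat \<Rightarrow> nat) \<Rightarrow> nat \<Rightarrow> nat \<Rightarrow> bool" where
  "mono_ap \<chi> k N \<longleftrightarrow> (\<exists>a d. 0 < d \<and> d \<le> N \<and> a + k*d < N \<and> (\<forall>i\<le>k. \<chi> (a+i*d) = \<chi> a))"

definition vdw :: "nat \<Rightarrow> nat \<Rightarrow> nat \<Rightarrow> bool" where
  "vdw k r N \<longleftrightarrow> (\<forall>\<chi>. (\<forall>x<N. \<chi> x < r) \<longrightarrow> mono_ap \<chi> k N)"

definition focused :: "(nat \<Rightarrow> nat) \<Rightarrow> nat \<Rightarrow> nat \<Rightarrow> nat \<Rightarrow> bool" where
  "focused \<chi> k s N \<longleftrightarrow> (\<exists>f b dd. f < N \<and>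
     (\<forall>j<s. 0 < dd j \<and> b j + (Suc k)*dd j = f \<and> (\<forall>i\<le>k. \<chi> (b j + i*dd j) = \<chi> (b j)))
     \<and> inj_on (\<lambda>j. \<chi> (b j)) {..<s})"

lemma encode_finite:
  assumes "finite C" shows "\<exists>h. inj_on h C \<and> (\<forall>x\<in>C. h x < card C)"
proof -
  obtain h where "bij_betw h C {0..<card C}" using ex_bij_betw_finite_nat[OF assms] by blast
  hence "inj_on h C" "\<forall>x\<in>C. h x < card C" by (auto simp: bij_betw_def)
  thus ?thesis by blast
qed

lemma vdw_pos: "vdw k r N \<Longrightarrow> 0 < N"
  unfolding vdw_def mono_ap_def by (cases N) auto

lemma mono_ap_shift:
  assumes "mono_ap (\<lambda>u. \<chi> (c + u)) k L" "c + L \<le> N"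
  shows "mono_ap \<chi> k N"
proof -
  obtain a d where ad: "0 < d" "d \<le> L" "a + k*d < L" "\<forall>i\<le>k. \<chi> (c + (a+i*d)) = \<chi> (c+a)"
    using assms(1) unfolding mono_ap_def by blast
  show ?thesis unfolding mono_ap_def
    apply (rule exI[of _ "c+a"], rule exI[of _ d])
    using ad assms(2) by (auto simp: add.assoc)
qed

lemma focus_lemma:
  assumes IH: "\<forall>r. \<exists>N. vdw k r N"
  shows "\<exists>N>0. \<forall>\<chi>. (\<forall>x<N. \<chi> x < r) \<longrightarrow> mono_ap \<chi> (Suc k) N \<or> focused \<chi> k s N"
proof (induction s)
  case 0
  show ?case
    by (rule exI[of _ 1]) (auto simp: focused_def)
next
  case (Suc s)
  then obtain L where L0: "0 < L" and PL: "\<And>\<chi>. (\<forall>x<L. \<chi> x < r) \<Longrightarrow> mono_ap \<chi> (Suc k) L \<or> focused \<chi> k s L"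
    by blast
  define C where "C = {xs. set xs \<subseteq> {..<r} \<and> length xs = L}"
  have finC: "finite C" unfolding C_def by (rule finite_lists_length_eq) simp
  obtain h where h: "inj_on h C" "\<And>x. x\<in>C \<Longrightarrow> h x < card C" using encode_finite[OF finC] by blast
  obtain M where M: "vdw k (card C) M" using IH by blast
  have M0: "0 < M" using vdw_pos[OF M] .
  define N where "N = 2*M*L"
  have N0: "0 < N" using M0 L0 unfolding N_def by simp
  show ?case
  proof (rule exI[of _ N], intro conjI allI impI)
    show "0 < N" by fact
    fix \<chi> assume bnd: "\<forall>x<N. \<chi> x < r"
    define blk where "blk t = map (\<lambda>u. \<chi> (t*L+u)) [0..<L]" for t
    have blkC: "blk t \<in> C" if "t < M" for t
    proof -
      have "t*L + u < N" if "u < L" for u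
      proof -
        have "t*L + u < t*L + L" using that by simp
        also have "\<dots> = (t+1)*L" by simp
        also have "\<dots> \<le> M*L" using \<open>t<M\<close> by (intro mult_right_mono) auto
        also have "\<dots> \<le> N" unfolding N_def by simp
        finally show ?thesis .
      qed
      thus ?thesis using bnd unfolding C_def blk_def by auto
    qed
    define \<psi> where "\<psi> t = h (blk t)" for t
    have "\<forall>x<M. \<psi> x < card C" using blkC h(2) unfolding \<psi>_def by blast
    then obtain t0 e where te: "0 < e" "e \<le> M" "t0 + k*e < M" "\<forall>i\<le>k. \<psi> (t0+i*e) = \<psi> t0"
      using M unfolding vdw_def mono_ap_def by blast
    have blkeq: "\<chi> ((t0+i*e)*L + u) = \<chi> (t0*L + u)" if "i \<le> k" "u < L" for i u
    proof -
      have "t0 + i*e \<le> t0 + k*e" using that by simp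
      hence "t0 + i*e < M" using te by linarith
      hence "blk (t0+i*e) = blk t0" using h(1) blkC te(4) that(1) te(3) unfolding \<psi>_def
        by (metis inj_on_eq_iff le_add1 le_less_trans)
      hence "blk (t0+i*e) ! u = blk t0 ! u" by simp
      thus ?thesis using that unfolding blk_def by simp
    qed
    define \<chi>' where "\<chi>' u = \<chi> (t0*L + u)" for u
    have t0M: "t0 < M" using te by linarith
    have LN: "t0*L + L \<le> N"
    proof -
      have "t0*L + L = (t0+1)*L" by simp
      also have "\<dots> \<le> M*L" using t0M by (intro mult_right_mono) auto
      finally show ?thesis unfolding N_def by simp
    qed
    have bnd': "\<forall>x<L. \<chi>' x < r" using bnd LN unfolding \<chi>'_def by auto
    from PL[OF bnd'] show "mono_ap \<chi> (Suc k) N \<or> focused \<chi> k (Suc s) N"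
    proof
      assume "mono_ap \<chi>' (Suc k) L"
      hence "mono_ap \<chi> (Suc k) N" using mono_ap_shift[OF _ LN] unfolding \<chi>'_def by blast
      thus ?thesis by blast
    next
      assume "focused \<chi>' k s L"
      then obtain f b dd where fb: "f < L"
        "\<forall>j<s. 0 < dd j \<and> b j + (Suc k)*dd j = f \<and> (\<forall>i\<le>k. \<chi>' (b j + i*dd j) = \<chi>' (b j))"
        "inj_on (\<lambda>j. \<chi>' (b j)) {..<s}" unfolding focused_def by blast
      show ?thesis
      proof (cases "\<exists>j<s. \<chi>' f = \<chi>' (b j)")
        case True
        then obtain j where j: "j < s" "\<chi>' f = \<chi>' (b j)" by blast
        have "mono_ap \<chi>' (Suc k) L" unfolding mono_ap_def
        proof (rule exI[of _ "b j"], rule exI[of _ "dd j"], intro conjI allI impI)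
          show "0 < dd j" using fb(2) j by blast
          have e1: "b j + Suc k * dd j = f" using fb(2) j by blast
          have "dd j \<le> Suc k * dd j" by simp
          thus "dd j \<le> L" using e1 fb(1) by linarith
          show "b j + Suc k * dd j < L" using e1 fb(1) by simp
          fix i assume "i \<le> Suc k"
          thus "\<chi>' (b j + i * dd j) = \<chi>' (b j)"
            using fb(2) j e1 by (cases "i = Suc k") auto
        qed
        hence "mono_ap \<chi> (Suc k) N" using mono_ap_shift[OF _ LN] unfolding \<chi>'_def by blast
        thus ?thesis by blast
      next
        case False
        define b' where "b' j = (if j < s then t0*L + b j else t0*L + f)" for j
        define dd' where "dd' j = (if j < s then dd j + e*L else e*L)" for j
        define f' where "f' = t0*L + f + Suc k * (e*L)"
        have "focused \<chi> k (Suc s) N" unfolding focused_def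
        proof (rule exI[of _ f'], rule exI[of _ b'], rule exI[of _ dd'], intro conjI)
          have "f' = (t0 + Suc k * e)*L + f" unfolding f'_def by (simp add: algebra_simps)
          also have "\<dots> < (t0 + Suc k * e)*L + L" using fb(1) by simp
          also have "\<dots> = (t0 + k*e + e + 1) * L" by (simp add: algebra_simps)
          also have "\<dots> \<le> (2*M)*L" using te by (intro mult_right_mono) auto
          finally show "f' < N" unfolding N_def by simp
        next
          show "\<forall>j<Suc s. 0 < dd' j \<and> b' j + Suc k * dd' j = f' \<and> (\<forall>i\<le>k. \<chi> (b' j + i * dd' j) = \<chi> (b' j))"
          proof (intro allI impI conjI)
          fix j assume js: "j < Suc s"
          show "0 < dd' j" using fb(2) te(1) L0 js unfolding dd'_def by auto
        next
          fix j assume js: "j < Suc s"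
          show "b' j + Suc k * dd' j = f'"
          proof (cases "j < s")
            case True
            hence "b j + Suc k * dd j = f" using fb(2) by blast
            thus ?thesis using True unfolding b'_def dd'_def f'_def by (simp add: algebra_simps)
          qed (simp add: b'_def dd'_def f'_def algebra_simps)
        next
          fix j i assume js: "j < Suc s" and ik: "i \<le> k"
          show "\<chi> (b' j + i * dd' j) = \<chi> (b' j)"
          proof (cases "j < s")
            case True
            have e1: "b j + Suc k * dd j = f" using fb(2) True by blast
            have "b j + i*dd j \<le> b j + Suc k * dd j" using ik by (simp add: add_increasing mult_right_mono)
            hence lt: "b j + i*dd j < L" using e1 fb(1) by linarith
            have "b' j + i * dd' j = (t0 + i*e)*L + (b j + i*dd j)" using True
              unfolding b'_def dd'_def by (simp add: algebra_simps)
            hence "\<chi> (b' j + i * dd' j) = \<chi>' (b j + i*dd j)" using blkeq[OF ik lt] unfolding \<chi>'_def by simp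
            also have "\<dots> = \<chi>' (b j)" using fb(2) True ik by blast
            finally show ?thesis using True unfolding b'_def \<chi>'_def by simp
          next
            case False
            have "b' j + i * dd' j = (t0 + i*e)*L + f" using False
              unfolding b'_def dd'_def by (simp add: algebra_simps)
            hence "\<chi> (b' j + i * dd' j) = \<chi> (t0*L + f)" using blkeq[OF ik fb(1)] by simp
            thus ?thesis using False unfolding b'_def by simp
          qed
          qed
        next
          show "inj_on (\<lambda>j. \<chi> (b' j)) {..<Suc s}"
          proof (rule inj_onI)
            fix x y assume xy: "x \<in> {..<Suc s}" "y \<in> {..<Suc s}" "\<chi> (b' x) = \<chi> (b' y)"
            have cx: "\<chi> (b' x) = (if x < s then \<chi>' (b x) else \<chi>' f)" for x
              unfolding b'_def \<chi>'_def by simp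
            show "x = y"
            proof (cases "x < s"; cases "y < s")
              assume "x < s" "y < s"
              thus ?thesis using xy(3) cx fb(3) by (auto dest: inj_onD)
            next
              assume "x < s" "\<not> y < s"
              thus ?thesis using xy(3) cx False by metis
            next
              assume "\<not> x < s" "y < s"
              thus ?thesis using xy(3) cx False by metis
            next
              assume "\<not> x < s" "\<not> y < s"
              thus ?thesis using xy by auto
            qed
          qed
        qed
        thus ?thesis by blast
      qed
    qed
  qed
qed

theorem vdw_exists: "\<exists>N. vdw k r N"
proof (induction k arbitrary: r)
  case 0
  show ?case by (rule exI[of _ 1]) (auto simp: vdw_def mono_ap_def)
next
  case (Suc k)
  hence IH: "\<forall>r. \<exists>N. vdw k r N" by blast
  obtain N where N: "0 < N" "\<And>\<chi>. (\<forall>x<N. \<chi> x < r) \<Longrightarrow> mono_ap \<chi> (Suc k) N \<or> focused \<chi> k r N"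
    using focus_lemma[OF IH, of r r] by blast
  have "vdw (Suc k) r N" unfolding vdw_def
  proof (intro allI impI)
    fix \<chi> assume bnd: "\<forall>x<N. \<chi> x < r"
    from N(2)[OF bnd] show "mono_ap \<chi> (Suc k) N"
    proof
      assume "focused \<chi> k r N"
      then obtain f b dd where fb: "f < N"
        "\<forall>j<r. 0 < dd j \<and> b j + (Suc k)*dd j = f \<and> (\<forall>i\<le>k. \<chi> (b j + i*dd j) = \<chi> (b j))"
        "inj_on (\<lambda>j. \<chi> (b j)) {..<r}" unfolding focused_def by blast
      have "(\<lambda>j. \<chi> (b j)) ` {..<r} \<subseteq> {..<r}"
      proof
        fix y assume "y \<in> (\<lambda>j. \<chi> (b j)) ` {..<r}"
        then obtain j where j: "j < r" "y = \<chi> (b j)" by auto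
        have "b j \<le> f" using fb(2) j(1) by (metis le_add1)
        thus "y \<in> {..<r}" using bnd fb(1) j by auto
      qed
      hence im: "(\<lambda>j. \<chi> (b j)) ` {..<r} = {..<r}" using endo_inj_surj[OF _ _ fb(3)] by blast
      have "\<chi> f \<in> {..<r}" using bnd fb(1) by auto
      then obtain j where j: "j < r" "\<chi> f = \<chi> (b j)" using im by (metis imageE lessThan_iff)
      show "mono_ap \<chi> (Suc k) N" unfolding mono_ap_def
      proof (rule exI[of _ "b j"], rule exI[of _ "dd j"], intro conjI allI impI)
        show "0 < dd j" using fb(2) j by blast
        have e1: "b j + Suc k * dd j = f" using fb(2) j by blast
        have "dd j \<le> Suc k * dd j" by simp
        thus "dd j \<le> N" using e1 fb(1) by linarith
        show "b j + Suc k * dd j < N" using e1 fb(1) by simp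
        fix i assume "i \<le> Suc k"
        thus "\<chi> (b j + i * dd j) = \<chi> (b j)"
          using fb(2) j e1 by (cases "i = Suc k") auto
      qed
    qed
  qed
  thus ?case by blast
qed



lemma avoid:
  fixes \<beta> :: "'j \<Rightarrow> nat \<Rightarrow> rat" and c :: "'j \<Rightarrow> rat"
  assumes "finite P" "finite J" "\<forall>j\<in>J. \<exists>k\<in>P. \<beta> j k \<noteq> 0"
  shows "\<exists>t. (\<forall>k. t k \<le> card J) \<and> (\<forall>j\<in>J. c j + (\<Sum>k\<in>P. \<beta> j k * of_nat (t k)) \<noteq> 0)"
  using assms
proof (induction P arbitrary: J c rule: finite_induct)
  case empty
  hence "J = {}" by auto
  thus ?case by (intro exI[of _ "\<lambda>_. 0"]) auto
next
  case (insert p P)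
  define J1 where "J1 = {j\<in>J. \<beta> j p = 0}"
  define J2 where "J2 = J - J1"
  have fJ1: "finite J1" "J1 \<subseteq> J" using insert.prems unfolding J1_def by auto
  have "\<forall>j\<in>J1. \<exists>k\<in>P. \<beta> j k \<noteq> 0" using insert.prems(2) unfolding J1_def by auto
  then obtain t0 where t0: "\<forall>k. t0 k \<le> card J1" "\<forall>j\<in>J1. c j + (\<Sum>k\<in>P. \<beta> j k * of_nat (t0 k)) \<noteq> 0"
    using insert.IH[OF fJ1(1)] by blast
  have cJ1: "card J1 \<le> card J" using fJ1 insert.prems(1) by (simp add: card_mono)
  define root where "root j = - (c j + (\<Sum>k\<in>P. \<beta> j k * of_nat (t0 k))) / \<beta> j p" for j
  have fin2: "finite J2" using insert.prems(1) unfolding J2_def by simp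
  have "card (root ` J2) \<le> card J2" using fin2 by (rule card_image_le)
  also have "\<dots> \<le> card J" using insert.prems(1) unfolding J2_def by (simp add: card_mono)
  also have "\<dots> < card ((of_nat :: nat \<Rightarrow> rat) ` {0..card J})"
    by (subst card_image) (auto simp: inj_on_def)
  finally have "\<not> (of_nat :: nat \<Rightarrow> rat) ` {0..card J} \<subseteq> root ` J2"
    using fin2 by (meson card_mono finite_imageI not_le)
  then obtain z where z: "z \<le> card J" "(of_nat z :: rat) \<notin> root ` J2" by (auto simp: subset_iff)
  define t where "t = t0(p := z)"
  have sumP: "(\<Sum>k\<in>P. \<beta> j k * of_nat (t k)) = (\<Sum>k\<in>P. \<beta> j k * of_nat (t0 k))" for j
    using insert.hyps(2) unfolding t_def by (intro sum.cong) auto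
  show ?case
  proof (rule exI[of _ t], intro conjI ballI allI)
    fix k show "t k \<le> card J" using t0(1) cJ1 z(1) unfolding t_def by (auto intro: le_trans)
  next
    fix j assume j: "j \<in> J"
    have eq: "c j + (\<Sum>k\<in>insert p P. \<beta> j k * of_nat (t k)) =
          c j + (\<Sum>k\<in>P. \<beta> j k * of_nat (t0 k)) + \<beta> j p * of_nat z"
      using insert.hyps sumP unfolding t_def by (simp add: algebra_simps)
    show "c j + (\<Sum>k\<in>insert p P. \<beta> j k * of_nat (t k)) \<noteq> 0"
    proof (cases "j \<in> J1")
      case True
      hence "\<beta> j p = 0" unfolding J1_def by auto
      thus ?thesis using eq t0(2) True by simp
    next
      case False
      hence j2: "j \<in> J2" "\<beta> j p \<noteq> 0" using j unfolding J1_def J2_def by auto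
      show ?thesis
      proof
        assume "c j + (\<Sum>k\<in>insert p P. \<beta> j k * of_nat (t k)) = 0"
        hence "of_nat z = root j" using eq j2(2) unfolding root_def by (simp add: field_simps)
        thus False using z(2) j2(1) by auto
      qed
    qed
  qed
qed

lemma common_denom:
  fixes q :: "nat \<Rightarrow> rat"
  shows "\<exists>D::nat. 0 < D \<and> (\<forall>i\<le>m. \<exists>z::int. of_nat D * q i = of_int z)"
proof (induction m)
  case 0
  obtain p d where pd: "quotient_of (q 0) = (p, d)" by (cases "quotient_of (q 0)")
  have d0: "0 < d" using quotient_of_denom_pos[OF pd] .
  have "of_nat (nat d) * q 0 = of_int p" using quotient_of_div[OF pd] d0 by simp
  thus ?case using d0 by (intro exI[of _ "nat d"]) auto
next
  case (Suc m)
  then obtain D where D: "0 < D" "\<forall>i\<le>m. \<exists>z::int. of_nat D * q i = of_int z" by blast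
  obtain p d where pd: "quotient_of (q (Suc m)) = (p, d)" by (cases "quotient_of (q (Suc m))")
  have d0: "0 < d" using quotient_of_denom_pos[OF pd] .
  have qd: "of_nat (nat d) * q (Suc m) = of_int p" using quotient_of_div[OF pd] d0 by simp
  show ?case
  proof (rule exI[of _ "D * nat d"], intro conjI allI impI)
    show "0 < D * nat d" using D d0 by simp
    fix i assume "i \<le> Suc m"
    show "\<exists>z. of_nat (D * nat d) * q i = of_int z"
    proof (cases "i = Suc m")
      case True
      thus ?thesis using qd by (intro exI[of _ "int D * p"]) (simp add: algebra_simps flip: qd)
    next
      case False
      then obtain z where "of_nat D * q i = of_int z" using D \<open>i \<le> Suc m\<close> by (meson le_Suc_eq)
      thus ?thesis by (intro exI[of _ "z * d"]) (simp add: algebra_simps d0 of_nat_nat less_imp_le flip: \<open>of_nat D * q i = of_int z\<close>)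
    qed
  qed
qed


theorem theorem3:
  fixes n m :: nat and a :: "nat \<Rightarrow> int" and c :: "nat \<Rightarrow> nat \<Rightarrow> rat"
  assumes nonzero: "\<forall>i\<in>{1..n}. a i \<noteq> 0"
    and ut: "upper_triangular m c"
    and pos: "\<forall>i\<in>{1..m}. \<forall>j\<in>{1..m}. i \<le> j \<longrightarrow> 0 < c i j"
    and entries: "\<forall>i\<in>{1..m}. \<forall>j\<in>{1..m}. i \<le> j \<longrightarrow> (\<exists>l\<in>{1..n}. c i j = S_val n a l)"
    and link: "linkage_property m c"
  shows "strongly_m_regular m n a"
  unfolding strongly_m_regular_def m_regular_def
proof (intro allI impI)
  fix ineqs :: "(nat \<Rightarrow> int) list" and chi :: "nat \<Rightarrow> nat"
  assume nm: "\<forall>A\<in>set ineqs. \<not> is_multiple n a A"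
  assume colb: "\<forall>x. 0 < x \<longrightarrow> chi x < m"
  have m1: "1 \<le> m" using colb[rule_format, of 1] by simp
  define c0 where "c0 i = (if i = 0 then 1 else c 1 i)" for i
  have c0pos: "0 < c0 i" if "i \<le> m" for i
    using pos m1 that unfolding c0_def by auto
  obtain D :: nat where D: "0 < D" "\<forall>i\<le>m. \<exists>z::int. of_nat D * c0 i = of_int z"
    using common_denom by blast
  have "\<forall>i. \<exists>z::int. i \<le> m \<longrightarrow> of_nat D * c0 i = of_int z" using D(2) by blast
  then obtain zz where zz: "\<And>i. i \<le> m \<Longrightarrow> of_nat D * c0 i = of_int (zz i)" by metis
  have zzpos: "0 < zz i" if "i \<le> m" for i
  proof -
    have "0 < of_nat D * c0 i" using D(1) c0pos[OF that] by simp
    hence "(0::rat) < of_int (zz i)" using zz[OF that] by simp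
    thus ?thesis by simp
  qed
  define g where "g i y = nat (zz i) * y" for i y
  define C where "C = {xs. set xs \<subseteq> {..<m} \<and> length xs = Suc m}"
  have finC: "finite C" unfolding C_def by (rule finite_lists_length_eq) simp
  obtain h where h: "inj_on h C" "\<And>x. x\<in>C \<Longrightarrow> h x < card C" using encode_finite[OF finC] by blast
  define Asum where "Asum = (\<Sum>i=1..n. \<bar>a i\<bar>)"
  define T where "T = card (set ineqs)"
  define M where "M = nat Asum * T"
  define K where "K = 2*M"
  obtain NN where NN: "vdw K (card C) NN" using vdw_exists by blast
  define lst where "lst t = map (\<lambda>i. chi (g i (t+1))) [0..<Suc m]" for t
  have lstC: "lst t \<in> C" for t
  proof -
    have "chi (g i (t+1)) < m" if "i \<le> m" for i
      using colb zzpos[OF that] unfolding g_def by simp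
    thus ?thesis unfolding C_def lst_def by auto
  qed
  define \<psi> where "\<psi> t = h (lst t)" for t
  have "\<forall>x<NN. \<psi> x < card C" unfolding \<psi>_def using h(2) lstC by blast
  then obtain st dd where sd: "0 < dd" "\<forall>u\<le>K. \<psi> (st+u*dd) = \<psi> st"
    using NN unfolding vdw_def mono_ap_def by blast
  have coleq: "chi (g i (st+u*dd+1)) = chi (g i (st+1))" if "u \<le> K" "i \<le> m" for u i
  proof -
    have "lst (st+u*dd) = lst st" using sd(2) that(1) h(1) lstC unfolding \<psi>_def
      by (metis inj_on_eq_iff)
    hence "lst (st+u*dd) ! i = lst st ! i" by simp
    thus ?thesis using that(2) unfolding lst_def by (simp del: upt_Suc)
  qed
  define F where "F i = chi (g i (st+1))" for i
  have "\<not> inj_on F {..m}"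
  proof
    assume "inj_on F {..m}"
    moreover have "F ` {..m} \<subseteq> {..<m}" using colb zzpos unfolding F_def g_def by auto
    ultimately have "card {..m} \<le> card {..<m}" using card_inj_on_le by blast
    thus False by simp
  qed
  then obtain i0 j0 where ij0: "i0 \<le> m" "j0 \<le> m" "i0 \<noteq> j0" "F i0 = F j0"
    unfolding inj_on_def by auto
  obtain i j where ij: "i < j" "j \<le> m" "F i = F j"
  proof (cases "i0 < j0")
    case True thus ?thesis using that ij0 by blast
  next
    case False thus ?thesis using that[of j0 i0] ij0 by auto
  qed
  have im: "i \<le> m" using ij by simp
  obtain l where l: "l \<in> {1..n}" "c0 j = c0 i * S_val n a l"
  proof (cases "i = 0")
    case True
    hence "1 \<le> j" using ij by simp
    then obtain l where "l \<in> {1..n}" "c 1 j = S_val n a l"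
      using entries ij m1 \<open>1 \<le> j\<close> by (meson atLeastAtMost_iff le_refl)
    thus ?thesis using that True \<open>1 \<le> j\<close> unfolding c0_def by auto
  next
    case False
    have lk: "c 1 i * c (i+1) j = c 1 j" using link ij False unfolding linkage_property_def by auto
    obtain l where "l \<in> {1..n}" "c (i+1) j = S_val n a l"
    proof -
      have "i+1 \<in> {1..m}" "j \<in> {1..m}" "i+1 \<le> j" using ij by auto
      thus ?thesis using entries that by blast
    qed
    thus ?thesis using that False lk ij unfolding c0_def by auto
  qed
  define Sv where "Sv = S_val n a l"
  have Svpos: "0 < Sv"
  proof -
    have "0 < c0 j" using c0pos ij by simp
    hence "0 < c0 i * Sv" using l(2) unfolding Sv_def by simp
    thus ?thesis using c0pos[OF im] by (simp add: zero_less_mult_iff)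
  qed
  define P where "P = {1..n} - {l}"
  define S' where "S' = (\<Sum>k\<in>P. a k)"
  have al0: "a l \<noteq> 0" using nonzero l by blast
  have sumsplit: "(\<Sum>k=1..n. f k) = f l + (\<Sum>k\<in>P. f k)" for f :: "nat \<Rightarrow> 'b::comm_monoid_add"
    unfolding P_def using l(1) by (simp add: sum.remove)
  have Sv_eq: "Sv = - of_int S' / of_int (a l)"
    unfolding Sv_def S_val_def S'_def using sumsplit[of a] by simp
  have alSv: "of_int (a l) * Sv = - of_int S'" using Sv_eq al0 by simp
  have S'0: "S' \<noteq> 0" using Svpos Sv_eq by auto
  define R where "R = (of_int (zz i) :: rat)"
  define R' where "R' = (of_int (zz j) :: rat)"
  have R'eq: "R' = R * Sv" unfolding R_def R'_def using zz[OF im] zz[OF ij(2)] l(2)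
    by (metis Sv_def mult.assoc)
  have Rpos: "0 < R" unfolding R_def using zzpos[OF im] by simp
  define X where "X = (of_nat st + 1 + of_nat M * of_nat dd :: rat)"
  define cst where "cst A = (\<Sum>k\<in>P. of_int (A k) * R * X) + of_int (A l) * R' * X" for A :: "nat \<Rightarrow> int"
  define \<beta> where "\<beta> A k = of_int (A k) * R * of_int S' * of_nat dd + of_int (A l) * R' * of_int (a k) * of_nat dd"
    for A :: "nat \<Rightarrow> int" and k
  have finP: "finite P" unfolding P_def by simp
  have betanz: "\<forall>A\<in>set ineqs. \<exists>k\<in>P. \<beta> A k \<noteq> 0"
  proof
    fix A assume A: "A \<in> set ineqs"
    show "\<exists>k\<in>P. \<beta> A k \<noteq> 0"
    proof (rule ccontr)
      assume "\<not> ?thesis"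
      hence z: "\<beta> A k = 0" if "k \<in> P" for k using that by blast
      have "is_multiple n a A" unfolding is_multiple_def
      proof (rule exI[of _ "of_int (A l) / of_int (a l)"], intro ballI)
        fix k assume k: "k \<in> {1..n}"
        show "(of_int (A k) :: rat) = of_int (A l) / of_int (a l) * of_int (a k)"
        proof (cases "k = l")
          case True
          have "(of_int (a l) :: rat) \<noteq> 0" using al0 by simp
          thus ?thesis using True by simp
        next
          case False
          hence "k \<in> P" unfolding P_def using k by simp
          hence "\<beta> A k = 0" by (rule z)
          hence "R * of_nat dd * (of_int (A k) * of_int S' + of_int (A l) * Sv * of_int (a k)) = 0"
            unfolding \<beta>_def R'eq by (simp add: algebra_simps)
          hence e: "of_int (A k) * of_int S' + of_int (A l) * Sv * of_int (a k) = 0"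
            using Rpos sd(1) by simp
          have "(of_int (A k) :: rat) * of_int S' = of_int (A l) / of_int (a l) * of_int (a k) * of_int S'"
            using e unfolding Sv_eq using al0 by (simp add: field_simps)
          moreover have "(of_int S' :: rat) \<noteq> 0" using S'0 by simp
          ultimately show ?thesis by (metis mult_right_cancel)
        qed
      qed
      thus False using nm A by blast
    qed
  qed
  obtain t where t: "\<forall>k. t k \<le> card (set ineqs)"
      "\<forall>A\<in>set ineqs. cst A + (\<Sum>k\<in>P. \<beta> A k * of_nat (t k)) \<noteq> 0"
    using avoid[OF finP _ betanz, of cst] by blast
  define V where "V k = int M + S' * int (t k)" for k
  define W where "W = int M + (\<Sum>k\<in>P. a k * int (t k))"
  have absS': "\<bar>S'\<bar> \<le> Asum"
  proof -
    have "\<bar>S'\<bar> \<le> (\<Sum>k\<in>P. \<bar>a k\<bar>)" unfolding S'_def by (rule sum_abs)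
    also have "\<dots> \<le> Asum" unfolding Asum_def P_def by (rule sum_mono2) auto
    finally show ?thesis .
  qed
  have Asum0: "0 \<le> Asum" unfolding Asum_def by (simp add: sum_nonneg)
  have MA: "int M = Asum * int T" unfolding M_def using Asum0 by simp
  have tT: "int (t k) \<le> int T" for k using t(1) unfolding T_def by simp
  have Vb: "0 \<le> V k \<and> V k \<le> int K" for k
  proof -
    have "\<bar>S' * int (t k)\<bar> \<le> Asum * int T"
      using absS' tT by (simp add: abs_mult mult_mono Asum0)
    thus ?thesis unfolding V_def K_def using MA by (auto simp: abs_le_iff)
  qed
  have Wb: "0 \<le> W \<and> W \<le> int K"
  proof -
    have "\<bar>\<Sum>k\<in>P. a k * int (t k)\<bar> \<le> (\<Sum>k\<in>P. \<bar>a k * int (t k)\<bar>)" by (rule sum_abs)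
    also have "\<dots> \<le> (\<Sum>k\<in>P. \<bar>a k\<bar> * int T)"
      by (intro sum_mono) (simp add: abs_mult, intro mult_left_mono, use tT in auto)
    also have "\<dots> = (\<Sum>k\<in>P. \<bar>a k\<bar>) * int T" by (simp add: sum_distrib_right)
    also have "\<dots> \<le> Asum * int T"
    proof (rule mult_right_mono)
      show "(\<Sum>k\<in>P. \<bar>a k\<bar>) \<le> Asum" unfolding Asum_def P_def by (rule sum_mono2) auto
    qed simp
    finally show ?thesis unfolding W_def K_def using MA by (auto simp: abs_le_iff)
  qed
  define x where "x k = (if k = l then g j (st + nat W * dd + 1) else g i (st + nat (V k) * dd + 1))" for k
  have xl: "of_nat (x l) = R' * (of_nat st + 1 + of_int W * of_nat dd)"
    unfolding x_def g_def R'_def using zzpos[OF ij(2)] Wb by (simp add: of_nat_nat algebra_simps)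
  have xk: "of_nat (x k) = R * (of_nat st + 1 + of_int (V k) * of_nat dd)" if "k \<in> P" for k
  proof -
    have "k \<noteq> l" using that unfolding P_def by simp
    thus ?thesis unfolding x_def g_def R_def using zzpos[OF im] Vb[of k] by (simp add: of_nat_nat algebra_simps)
  qed
  have lin: "(of_int (lin_form n A x) :: rat) = cst A + (\<Sum>k\<in>P. \<beta> A k * of_nat (t k))" for A
  proof -
    have "(of_int (lin_form n A x) :: rat) = (\<Sum>k=1..n. of_int (A k) * of_nat (x k))"
      unfolding lin_form_def by simp
    also have "\<dots> = of_int (A l) * of_nat (x l) + (\<Sum>k\<in>P. of_int (A k) * of_nat (x k))"
      by (rule sumsplit)
    also have "(\<Sum>k\<in>P. of_int (A k) * of_nat (x k)) =
        (\<Sum>k\<in>P. of_int (A k) * R * X + of_nat (t k) * (of_int (A k) * R * of_int S' * of_nat dd))"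
      by (intro sum.cong refl) (simp add: xk V_def X_def algebra_simps)
    also have "\<dots> = (\<Sum>k\<in>P. of_int (A k) * R * X) + (\<Sum>k\<in>P. of_nat (t k) * (of_int (A k) * R * of_int S' * of_nat dd))"
      by (rule sum.distrib)
    also have "of_int (A l) * of_nat (x l) = of_int (A l) * R' * X +
        (\<Sum>k\<in>P. of_nat (t k) * (of_int (A l) * R' * of_int (a k) * of_nat dd))"
    proof -
      have "(\<Sum>k\<in>P. of_nat (t k) * (of_int (A l) * R' * of_int (a k) * of_nat dd)) =
            of_int (A l) * R' * of_nat dd * (\<Sum>k\<in>P. of_int (a k) * of_nat (t k))"
        by (simp add: sum_distrib_left algebra_simps)
      moreover have "(of_int W :: rat) = of_nat M + (\<Sum>k\<in>P. of_int (a k) * of_nat (t k))"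
        unfolding W_def by simp
      ultimately show ?thesis unfolding xl X_def by (simp add: algebra_simps)
    qed
    finally show ?thesis unfolding cst_def \<beta>_def by (simp add: sum.distrib algebra_simps)
  qed
  show "\<exists>x. (\<forall>i\<in>{1..n}. 0 < x i) \<and> (\<exists>col. \<forall>i\<in>{1..n}. chi (x i) = col) \<and>
        lin_form n a x = 0 \<and> (\<forall>A\<in>set ineqs. lin_form n A x \<noteq> 0)"
  proof (rule exI[of _ x], intro conjI ballI)
    fix k assume "k \<in> {1..n}"
    show "0 < x k" unfolding x_def g_def using zzpos[OF im] zzpos[OF ij(2)] by simp
  next
    show "\<exists>col. \<forall>k\<in>{1..n}. chi (x k) = col"
    proof (rule exI[of _ "F i"], intro ballI)
      fix k assume "k \<in> {1..n}"
      show "chi (x k) = F i"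
      proof (cases "k = l")
        case True
        have "nat W \<le> K" using Wb by linarith
        hence "chi (x k) = F j" using True coleq[OF _ ij(2)] unfolding x_def F_def by simp
        thus ?thesis using ij(3) by simp
      next
        case False
        have "nat (V k) \<le> K" using Vb[of k] by linarith
        thus ?thesis using False coleq[OF _ im] unfolding x_def F_def by simp
      qed
    qed
  next
    have "cst a = 0"
    proof -
      have "cst a = X * R * (of_int S' + of_int (a l) * Sv)"
        unfolding cst_def R'eq S'_def by (simp add: sum_distrib_left sum_distrib_right algebra_simps)
      thus ?thesis using alSv by simp
    qed
    moreover have "\<beta> a k = 0" for k
    proof -
      have "\<beta> a k = of_int (a k) * R * of_nat dd * (of_int S' + of_int (a l) * Sv)"
        unfolding \<beta>_def R'eq by (simp add: algebra_simps)
      thus ?thesis using alSv by simp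
    qed
    ultimately have "(of_int (lin_form n a x) :: rat) = 0" using lin[of a] by simp
    thus "lin_form n a x = 0" by simp
  next
    fix A assume "A \<in> set ineqs"
    hence "(of_int (lin_form n A x) :: rat) \<noteq> 0" using lin[of A] t(2) by simp
    thus "lin_form n A x \<noteq> 0" by simp
  qed
qed

end
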